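(* In the LHARG setting described in the context, fix integers $t<T$ and $z\in\mathbb{R}$. Define backward recursively for $s=T-1,\dots,t$, with terminal conditions $A_T=0$, $B_{T,i}=0$ ($i=1,\dots,p$), $C_{T,j}=0$ ($j=1,\dots,q$): $$X_{s+1}=z\lambda+B_{s+1,1}+\frac{\tfrac12z^2+\gamma^2C_{s+1,1}-2C_{s+1,1}\gamma z}{1-2C_{s+1,1}},$$ $$A_s=A_{s+1}+zr-\tfrac12\ln(1-2C_{s+1,1})-\delta\,w(X_{s+1},\theta)+d\,v(X_{s+1},\theta),$$ $$B_{s,i}=B_{s+1,i+1}+v(X_{s+1},\theta)\beta_i\ (1\le i\le p-1),\qquad B_{s,p}=v(X_{s+1},\theta)\beta_p,$$ $$C_{s,j}=C_{s+1,j+1}+v(X_{s+1},\theta)\alpha_j\ (1\le j\le q-1),\qquad C_{s,q}=v(X_{s+1},\theta)\alpha_q.$$ Assume that $1-2C_{s+1,1}>0$ and $\theta X_{s+1}<1$ for all $s=t,\dots,T-1$. Then $$\varphi^{\mathbb{P}}(t,T,z):=\mathbb{E}^{\mathbb{P}}\left[e^{z y_{t,T}}\mid\mathcal{F}_t\right]=\exp\Big(A_t+\sum_{i=1}^pB_{t,i}\mathrm{RV}_{t+1-i}+\sum_{j=1}^qC_{t,j}\ell_{t+1-j}\Big),$$ where $y_{t,T}=\ln(S_T/S_t)=\sum_{s=t+1}^Ty_s$.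
   Context: LHARG setting. Discrete time. $(\epsilon_t)$ are i.i.d. $\mathcal{N}(0,1)$ and $(\mathrm{RV}_t)$ is a positive process (realized variance); $\mathcal{F}_t$ is the $\sigma$-algebra generated by $\{\epsilon_u,\mathrm{RV}_u:u\le t\}$. Parameters: $r\in\mathbb{R}$ (risk-free rate), $\lambda\in\mathbb{R}$, $\delta>0$, $\theta>0$, $d\ge0$, $\gamma\in\mathbb{R}$, integers $p,q\ge1$, $\beta_1,\dots,\beta_p\ge0$, $\alpha_1,\dots,\alpha_q\ge0$. Leverage: $\ell_t=(\epsilon_t-\gamma\sqrt{\mathrm{RV}_t})^2$. Log-returns: $y_{t+1}=\ln(S_{t+1}/S_t)=r+\lambda\mathrm{RV}_{t+1}+\sqrt{\mathrm{RV}_{t+1}}\,\epsilon_{t+1}$, with $\epsilon_{t+1}$ independent of $(\mathcal{F}_t,\mathrm{RV}_{t+1})$. Conditionally on $\mathcal{F}_t$, $\mathrm{RV}_{t+1}$ has the noncentral gamma law $\bar\gamma(\delta,\Theta_t,\theta)$ with $\Theta_t=d+\sum_{i=1}^p\beta_i\mathrm{RV}_{t+1-i}+\sum_{j=1}^q\alpha_j\ell_{t+1-j}$. Here $\bar\gamma(\delta,\Theta,\theta)$ (shape $\delta$, noncentrality $\Theta\ge0$, scale $\theta$) is the law of $\theta G$ where, conditionally on $N\sim\mathrm{Poisson}(\Theta)$, $G\sim\mathrm{Gamma}(\delta+N,1)$; for $X\sim\bar\gamma(\delta,\Theta,\theta)$ and $\theta x<1$, $\mathbb{E}[e^{xX}]=\exp(-\delta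 w(x,\theta)+\Theta v(x,\theta))$, where $v(x,\theta)=\frac{\theta x}{1-\theta x}$ and $w(x,\theta)=\ln(1-\theta x)$. (In the heterogeneous LHARG model proper, $p=q=22$, $\beta_1=\beta_d$, $\beta_i=\beta_w/4$ for $2\le i\le5$, $\beta_i=\beta_m/17$ for $6\le i\le22$, and likewise $\alpha_1=\alpha_d$, $\alpha_j=\alpha_w/4$ for $2\le j\le 5$, $\alpha_j=\alpha_m/17$ for $6\le j\le 22$.) *)

theory Defs
  imports "HOL-Probability.Probability"
begin

text \<open>Functions v and w of the noncentral gamma moment generating function.\<close>
definition ncg_v :: "real \<Rightarrow> real \<Rightarrow> real" where
  "ncg_v x \<theta> = \<theta> * x / (1 - \<theta> * x)"

definition ncg_w :: "real \<Rightarrow> real \<Rightarrow> real" where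
  "ncg_w x \<theta> = ln (1 - \<theta> * x)"

text \<open>Noncentral gamma law with shape \<delta>, noncentrality \<Theta>, scale \<theta>:
  the law of \<theta> G where G | N ~ Gamma(\<delta>+N,1), N ~ Poisson(\<Theta>).\<close>
definition ncgamma_density :: "real \<Rightarrow> real \<Rightarrow> real \<Rightarrow> real \<Rightarrow> real" where
  "ncgamma_density \<delta> \<Theta> \<theta> x =
     (if 0 < x then
        (\<Sum>n. exp (- \<Theta>) * \<Theta> ^ n / fact n *
              ((x / \<theta>) powr (\<delta> + real n - 1) * exp (- x / \<theta>) / (Gamma (\<delta> + real n) * \<theta>)))
      else 0)"

definition ncgamma :: "real \<Rightarrow> real \<Rightarrow> real \<Rightarrow> real measure" where
  "ncgamma \<delta> \<Theta> \<theta> = density lborel (\<lambda>x. ennreal (ncgamma_density \<delta> \<Theta> \<theta> x))"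

definition rv_events :: "'a measure \<Rightarrow> ('a \<Rightarrow> real) \<Rightarrow> 'a set set" where
  "rv_events M X = {X -` B \<inter> space M | B. B \<in> sets borel}"

definition lharg_filtration ::
  "'a measure \<Rightarrow> (int \<Rightarrow> 'a \<Rightarrow> real) \<Rightarrow> (int \<Rightarrow> 'a \<Rightarrow> real) \<Rightarrow> int \<Rightarrow> 'a measure" where
  "lharg_filtration M eps RV t =
     sigma (space M) (\<Union>u\<in>{..t}. rv_events M (eps u) \<union> rv_events M (RV u))"

definition leverage :: "real \<Rightarrow> (int \<Rightarrow> 'a \<Rightarrow> real) \<Rightarrow> (int \<Rightarrow> 'a \<Rightarrow> real) \<Rightarrow> int \<Rightarrow> 'a \<Rightarrow> real" where
  "leverage \<gamma> eps RV t \<omega> = (eps t \<omega> - \<gamma> * sqrt (RV t \<omega>))\<^sup>2"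

definition lharg_Theta ::
  "real \<Rightarrow> real \<Rightarrow> nat \<Rightarrow> nat \<Rightarrow> (nat \<Rightarrow> real) \<Rightarrow> (nat \<Rightarrow> real) \<Rightarrow>
   (int \<Rightarrow> 'a \<Rightarrow> real) \<Rightarrow> (int \<Rightarrow> 'a \<Rightarrow> real) \<Rightarrow> int \<Rightarrow> 'a \<Rightarrow> real" where
  "lharg_Theta d \<gamma> p q \<beta> \<alpha> eps RV t \<omega> =
     d + (\<Sum>i=1..p. \<beta> i * RV (t + 1 - int i) \<omega>)
       + (\<Sum>j=1..q. \<alpha> j * leverage \<gamma> eps RV (t + 1 - int j) \<omega>)"

text \<open>Backward recursion. lharg_coef ... k gives (A_s, B_s, C_s) with k = T - s;
  B and C are indexed by 1..p resp. 1..q and set to 0 outside.\<close>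
definition lharg_X :: "real \<Rightarrow> real \<Rightarrow> real \<Rightarrow> real \<times> (nat \<Rightarrow> real) \<times> (nat \<Rightarrow> real) \<Rightarrow> real" where
  "lharg_X lam \<gamma> z c = (case c of (A, B, C) \<Rightarrow>
     z * lam + B 1 + ((1/2) * z\<^sup>2 + \<gamma>\<^sup>2 * C 1 - 2 * C 1 * \<gamma> * z) / (1 - 2 * C 1))"

fun lharg_coef ::
  "real \<Rightarrow> real \<Rightarrow> real \<Rightarrow> real \<Rightarrow> real \<Rightarrow> real \<Rightarrow> nat \<Rightarrow> nat \<Rightarrow> (nat \<Rightarrow> real) \<Rightarrow> (nat \<Rightarrow> real)
   \<Rightarrow> real \<Rightarrow> nat \<Rightarrow> real \<times> (nat \<Rightarrow> real) \<times> (nat \<Rightarrow> real)" where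
  "lharg_coef r lam \<delta> \<theta> d \<gamma> p q \<beta> \<alpha> z 0 = (0, (\<lambda>_. 0), (\<lambda>_. 0))"
| "lharg_coef r lam \<delta> \<theta> d \<gamma> p q \<beta> \<alpha> z (Suc k) =
     (let c = lharg_coef r lam \<delta> \<theta> d \<gamma> p q \<beta> \<alpha> z k;
          A = fst c; B = fst (snd c); C = snd (snd c);
          X = lharg_X lam \<gamma> z c
      in (A + z * r - (1/2) * ln (1 - 2 * C 1) - \<delta> * ncg_w X \<theta> + d * ncg_v X \<theta>,
          (\<lambda>i. if 1 \<le> i \<and> i < p then B (i + 1) + ncg_v X \<theta> * \<beta> i
               else if i = p then ncg_v X \<theta> * \<beta> p else 0),
          (\<lambda>j. if 1 \<le> j \<and> j < q then C (j + 1) + ncg_v X \<theta> * \<alpha> j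
               else if j = q then ncg_v X \<theta> * \<alpha> q else 0)))"

end

theory Submission
  imports Defs
begin

lemma normal_density_nn_integral: "\<sigma> > 0 \<Longrightarrow> (\<integral>\<^sup>+x. ennreal (normal_density \<mu> \<sigma> x) \<partial>lborel) = 1"
proof -
  assume "\<sigma> > 0"
  interpret prob_space "density lborel (normal_density \<mu> \<sigma>)" by (rule prob_space_normal_density) fact
  show ?thesis using emeasure_space_1 by (simp add: emeasure_density)
qed

lemma gauss_mgf:
  fixes b c :: real assumes c: "c < 1/2"
  shows "(\<integral>\<^sup>+e. ennreal (std_normal_density e * exp (b*e + c*e^2)) \<partial>lborel)
       = ennreal (exp (b^2/(2*(1-2*c))) / sqrt(1-2*c))"
proof -
  define \<sigma> where "\<sigma> = 1 / sqrt (1-2*c)"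
  define \<mu> where "\<mu> = b / (1-2*c)"
  define K where "K = exp (b^2/(2*(1-2*c))) / sqrt(1-2*c)"
  have pos: "1 - 2*c > 0" using c by simp
  have s: "\<sigma> > 0" unfolding \<sigma>_def using pos by simp
  have s2: "\<sigma>^2 = 1/(1-2*c)" unfolding \<sigma>_def using pos by (simp add: power_divide)
  have pt: "std_normal_density e * exp (b*e + c*e^2) = K * normal_density \<mu> \<sigma> e" for e
  proof -
    have "sqrt (2*pi*\<sigma>^2) = sqrt (2*pi) * \<sigma>" using s by (simp add: real_sqrt_mult)
    moreover have "exp (- e\<^sup>2 / 2) * exp (b*e + c*e^2) = exp (b^2/(2*(1-2*c))) * exp (-(e - \<mu>)\<^sup>2/ (2 * \<sigma>\<^sup>2))"
    proof -
      define D where "D = 1 - 2*c"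
      have D: "D > 0" using pos D_def by simp
      have "- e\<^sup>2 / 2 + (b*e + c*e^2) = b^2/(2*D) - (e - b/D)\<^sup>2 * D / 2"
      proof -
        have cD: "c = (1 - D)/2" unfolding D_def by simp
        show ?thesis unfolding cD using D by (simp add: field_simps power2_eq_square)
      qed
      also have "\<dots> = b^2/(2*(1-2*c)) + (-(e - \<mu>)\<^sup>2/ (2 * \<sigma>\<^sup>2))"
        unfolding s2 \<mu>_def D_def[symmetric] using D by (simp add: field_simps)
      finally show ?thesis unfolding exp_add[symmetric] by simp
    qed
    ultimately show ?thesis using pos unfolding std_normal_density_def normal_density_def K_def \<sigma>_def
      by (simp add: field_simps)
  qed
  have K0: "K \<ge> 0" unfolding K_def using pos by simp
  have "(\<integral>\<^sup>+e. ennreal (std_normal_density e * exp (b*e + c*e^2)) \<partial>lborel)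
       = (\<integral>\<^sup>+e. ennreal K * ennreal (normal_density \<mu> \<sigma> e) \<partial>lborel)"
    by (simp add: pt ennreal_mult K0 normal_density_nonneg)
  also have "\<dots> = ennreal K" by (simp add: nn_integral_cmult normal_density_nn_integral s)
  finally show ?thesis unfolding K_def .
qed

lemma gamma_int:
  fixes a \<theta> X :: real
  assumes a: "a > 0" and th: "\<theta> > 0" and X: "\<theta> * X < 1"
  shows "(\<integral>\<^sup>+x. ennreal (indicator {0<..} x * ((x/\<theta>) powr (a-1) * exp (-x/\<theta>) / (Gamma a * \<theta>)) * exp (X*x)) \<partial>lborel)
       = ennreal ((1 - \<theta>*X) powr (-a))"
proof -
  define D where "D = 1 - \<theta>*X"
  have D: "D > 0" using X D_def by simp
  define c where "c = \<theta> / D"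
  have c: "c > 0" using D th c_def by simp
  have G: "Gamma a > 0" using a by (simp add: Gamma_real_pos)
  define f where "f = (\<lambda>x::real. ennreal (indicator {0<..} x * ((x/\<theta>) powr (a-1) * exp (-x/\<theta>) / (Gamma a * \<theta>)) * exp (X*x)))"
  have fm: "f \<in> borel_measurable borel" unfolding f_def by measurable
  have "(\<integral>\<^sup>+x. f x \<partial>lborel) = ennreal \<bar>c\<bar> * (\<integral>\<^sup>+x. f (0 + c * x) \<partial>lborel)"
    by (rule nn_integral_real_affine[OF fm]) (use c in simp)
  also have "\<dots> = (\<integral>\<^sup>+x. ennreal (1 / (Gamma a * D powr a)) * ennreal (indicator {0..} x * x powr (a - 1) / exp x) \<partial>lborel)"
  proof -
    have "ennreal c * f (c * x) = ennreal (1 / (Gamma a * D powr a)) * ennreal (indicator {0..} x * x powr (a - 1) / exp x)" for x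
    proof (cases "x > 0")
      case True
      have e: "exp (-(c*x)/\<theta>) * exp (X*(c*x)) = exp (-x)"
      proof -
        have "-(c*x)/\<theta> + X*(c*x) = - x * (1 - \<theta>*X) / D" unfolding c_def using th D by (simp add: field_simps)
        also have "\<dots> = -x" unfolding D_def[symmetric] using D by simp
        finally show ?thesis unfolding exp_add[symmetric] by simp
      qed
      have p: "(c*x/\<theta>) powr (a-1) = x powr (a-1) / D powr (a-1)"
        unfolding c_def using th D by (simp add: powr_divide)
      have pa: "D powr a = D powr (a-1) * D" using D by (simp add: powr_add[symmetric] powr_diff)
      have "c * (indicator {0<..} (c*x) * ((c*x/\<theta>) powr (a-1) * exp (-(c*x)/\<theta>) / (Gamma a * \<theta>)) * exp (X*(c*x)))
          = 1 / (Gamma a * D powr a) * (indicator {0..} x * x powr (a - 1) / exp x)"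
      proof -
        have "c * (indicator {0<..} (c*x) * ((c*x/\<theta>) powr (a-1) * exp (-(c*x)/\<theta>) / (Gamma a * \<theta>)) * exp (X*(c*x)))
           = c * ((c*x/\<theta>) powr (a-1) * (exp (-(c*x)/\<theta>) * exp (X*(c*x))) / (Gamma a * \<theta>))"
          using True c by (simp add: indicator_def mult_ac)
        also have "\<dots> = c * (x powr (a-1) / D powr (a-1) * exp (-x) / (Gamma a * \<theta>))"
          by (simp only: p e)
        also have "\<dots> = 1 / (Gamma a * D powr a) * (indicator {0..} x * x powr (a - 1) / exp x)"
          using True th D G unfolding pa c_def by (simp add: exp_minus field_simps)
        finally show ?thesis .
      qed
      then show ?thesis using True c th G D unfolding f_def
        by (simp add: ennreal_mult[symmetric] mult_nonneg_nonneg)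
    next
      case False
      then have "indicator {0<..} (c*x) = (0::real)" using c by (simp add: indicator_def zero_less_mult_iff)
      moreover have "indicator {0..} x * x powr (a - 1) = (0::real)" using False by (cases "x = 0") auto
      ultimately show ?thesis unfolding f_def by simp
    qed
    moreover have "(\<lambda>x. f (c*x)) \<in> borel_measurable lborel" using fm by simp
    ultimately show ?thesis using c by (simp add: nn_integral_cmult[symmetric])
  qed
  also have "\<dots> = ennreal (1 / (Gamma a * D powr a)) * ennreal (Gamma a)"
    by (simp add: nn_integral_cmult Gamma_conv_nn_integral_real[OF a])
  also have "\<dots> = ennreal (D powr (-a))"
    using G D by (simp add: ennreal_mult[symmetric] powr_minus field_simps)
  finally show ?thesis unfolding f_def D_def .
qed

lemma ncg_term_int:
  fixes \<delta> \<theta> \<Theta> X :: real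
  assumes d: "\<delta> > 0" and th: "\<theta> > 0" and X: "\<theta> * X < 1"
  shows "(\<integral>\<^sup>+x. ennreal (indicator {0<..} x * (exp (- \<Theta>) * \<Theta> ^ n / fact n *
              ((x / \<theta>) powr (\<delta> + real n - 1) * exp (- x / \<theta>) / (Gamma (\<delta> + real n) * \<theta>))) * exp (X*x)) \<partial>lborel)
     = ennreal (exp (- \<Theta>) * \<Theta> ^ n / fact n) * ennreal ((1 - \<theta>*X) powr (-(\<delta> + real n)))"
proof -
  define w where "w = exp (- \<Theta>) * \<Theta> ^ n / fact n"
  define g where "g = (\<lambda>x. indicator {0<..} x * 
              ((x / \<theta>) powr (\<delta> + real n - 1) * exp (- x / \<theta>) / (Gamma (\<delta> + real n) * \<theta>)) * exp (X*x))"
  have Gp: "Gamma (\<delta> + real n) > 0" using d by (simp add: Gamma_real_pos add_pos_nonneg)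
  have g0: "g x \<ge> 0" for x unfolding g_def using Gp th by (simp add: indicator_def)
  have "(\<integral>\<^sup>+x. ennreal (indicator {0<..} x * (w *
              ((x / \<theta>) powr (\<delta> + real n - 1) * exp (- x / \<theta>) / (Gamma (\<delta> + real n) * \<theta>))) * exp (X*x)) \<partial>lborel)
     = (\<integral>\<^sup>+x. ennreal w * ennreal (g x) \<partial>lborel)"
  proof (intro nn_integral_cong)
    fix x
    have e: "indicator {0<..} x * (w *
              ((x / \<theta>) powr (\<delta> + real n - 1) * exp (- x / \<theta>) / (Gamma (\<delta> + real n) * \<theta>))) * exp (X*x) = w * g x"
      unfolding g_def by (simp add: mult_ac)
    show "ennreal (indicator {0<..} x * (w *
              ((x / \<theta>) powr (\<delta> + real n - 1) * exp (- x / \<theta>) / (Gamma (\<delta> + real n) * \<theta>))) * exp (X*x)) = ennreal w * ennreal (g x)"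
      unfolding e
    proof (cases "w \<ge> 0")
      case True
      then show "ennreal (w * g x) = ennreal w * ennreal (g x)" using g0 by (simp add: ennreal_mult)
    next
      case False
      then have "w * g x \<le> 0" using g0 by (simp add: mult_nonpos_nonneg)
      then show "ennreal (w * g x) = ennreal w * ennreal (g x)" using False by (simp add: ennreal_neg)
    qed
  qed
  also have "\<dots> = ennreal w * ennreal ((1 - \<theta>*X) powr (-(\<delta> + real n)))"
    proof -
    have "(\<integral>\<^sup>+x. ennreal (g x) \<partial>lborel) = ennreal ((1 - \<theta>*X) powr (-(\<delta> + real n)))"
      unfolding g_def by (rule gamma_int) (use d th X in \<open>auto simp: add_pos_nonneg\<close>)
    moreover have "g \<in> borel_measurable lborel" unfolding g_def by measurable
    ultimately show ?thesis by (simp add: nn_integral_cmult)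
  qed
  finally show ?thesis unfolding w_def .
qed

lemma ncg_series:
  fixes \<delta> \<Theta> D :: real
  assumes D: "D > 0" and T: "\<Theta> \<ge> 0"
  shows "(\<Sum>n. ennreal (exp (- \<Theta>) * \<Theta> ^ n / fact n) * ennreal (D powr (-(\<delta> + real n))))
       = ennreal (exp (- \<Theta>) * D powr (-\<delta>) * exp (\<Theta> / D))"
proof -
  define K where "K = exp (- \<Theta>) * D powr (-\<delta>)"
  have eq: "ennreal (exp (- \<Theta>) * \<Theta> ^ n / fact n) * ennreal (D powr (-(\<delta> + real n)))
      = ennreal (K * ((\<Theta>/D)^n /\<^sub>R fact n))" for n
  proof -
    have "D powr (-(\<delta> + real n)) = D powr (-\<delta>) * D powr (- real n)"
      by (simp add: powr_add[symmetric])
    also have "D powr (- real n) = inverse (D^n)" using D by (simp add: powr_minus powr_realpow)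
    finally have "D powr (-(\<delta> + real n)) = D powr (-\<delta>) / D^n" by (simp add: divide_inverse)
    then show ?thesis unfolding K_def using D T
      by (simp add: ennreal_mult[symmetric] power_divide field_simps)
  qed
  have "(\<lambda>n. K * ((\<Theta>/D)^n /\<^sub>R fact n)) sums (K * exp (\<Theta>/D))"
    by (rule sums_mult) (rule exp_converges)
  then have "(\<Sum>n. ennreal (K * ((\<Theta>/D)^n /\<^sub>R fact n))) = ennreal (K * exp (\<Theta>/D))"
    by (rule suminf_ennreal_eq[rotated]) (use D T in \<open>simp add: K_def\<close>)
  then show ?thesis unfolding eq K_def by simp
qed

lemma ncgamma_mgf:
  fixes \<delta> \<theta> \<Theta> X :: real
  assumes d: "\<delta> > 0" and th: "\<theta> > 0" and T: "\<Theta> \<ge> 0" and X: "\<theta> * X < 1"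
  shows "(\<integral>\<^sup>+x. ennreal (exp (X*x)) \<partial>ncgamma \<delta> \<Theta> \<theta>) = ennreal (exp (-\<delta> * ncg_w X \<theta> + \<Theta> * ncg_v X \<theta>))"
proof -
  define tm where "tm = (\<lambda>n x. indicator {0<..} x * (exp (- \<Theta>) * \<Theta> ^ n / fact n *
              ((x / \<theta>) powr (\<delta> + real n - 1) * exp (- x / \<theta>) / (Gamma (\<delta> + real n) * \<theta>))))"
  have tm0: "tm n x \<ge> 0" for n x
  proof -
    have "Gamma (\<delta> + real n) > 0" using d by (simp add: Gamma_real_pos add_pos_nonneg)
    then show ?thesis unfolding tm_def using th T by (simp add: indicator_def)
  qed
  have tmm[measurable]: "(\<lambda>x. tm n x) \<in> borel_measurable borel" for n unfolding tm_def by measurable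
  have int: "(\<integral>\<^sup>+x. ennreal (tm n x * exp (Y*x)) \<partial>lborel)
     = ennreal (exp (- \<Theta>) * \<Theta> ^ n / fact n) * ennreal ((1 - \<theta>*Y) powr (-(\<delta> + real n)))"
    if "\<theta> * Y < 1" for n Y unfolding tm_def by (rule ncg_term_int[OF d th that])
  define S where "S = (\<lambda>x. \<Sum>n. ennreal (tm n x))"
  have Sm: "S \<in> borel_measurable lborel" unfolding S_def by measurable
  have "(\<integral>\<^sup>+x. S x \<partial>lborel) = (\<Sum>n. \<integral>\<^sup>+x. ennreal (tm n x) \<partial>lborel)"
    unfolding S_def by (rule nn_integral_suminf) simp
  also have "\<dots> = (\<Sum>n. ennreal (exp (- \<Theta>) * \<Theta> ^ n / fact n) * ennreal ((1 - \<theta>*0) powr (-(\<delta> + real n))))"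
    using int[of 0] th by simp
  also have "\<dots> = ennreal (exp (- \<Theta>) * 1 powr (-\<delta>) * exp (\<Theta> / 1))"
    by (simp only: mult_zero_right diff_zero ncg_series[OF zero_less_one T])
  also have "\<dots> = 1" by (simp add: exp_minus)
  finally have "(\<integral>\<^sup>+x. S x \<partial>lborel) \<noteq> \<infinity>" by simp
  then have AEfin: "AE x in lborel. S x \<noteq> \<infinity>" by (rule nn_integral_noteq_infinite[OF Sm])
  have AEeq: "AE x in lborel. ennreal (ncgamma_density \<delta> \<Theta> \<theta> x) = S x"
    using AEfin
  proof eventually_elim
    case (elim x)
    show ?case
    proof (cases "x > 0")
      case True
      have "S x = ennreal (\<Sum>n. tm n x)" unfolding S_def
        by (rule suminf_ennreal) (use tm0 elim in \<open>auto simp: S_def\<close>)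
      also have "(\<Sum>n. tm n x) = ncgamma_density \<delta> \<Theta> \<theta> x"
        unfolding ncgamma_density_def tm_def using True by simp
      finally show ?thesis by simp
    next
      case False
      then show ?thesis unfolding S_def tm_def ncgamma_density_def by simp
    qed
  qed
  have dm: "(\<lambda>x. ennreal (ncgamma_density \<delta> \<Theta> \<theta> x)) \<in> borel_measurable lborel"
    unfolding ncgamma_density_def by measurable
  define D where "D = 1 - \<theta> * X"
  have D: "D > 0" using X D_def by simp
  have "(\<integral>\<^sup>+x. ennreal (exp (X*x)) \<partial>ncgamma \<delta> \<Theta> \<theta>)
      = (\<integral>\<^sup>+x. ennreal (ncgamma_density \<delta> \<Theta> \<theta> x) * ennreal (exp (X*x)) \<partial>lborel)"
    unfolding ncgamma_def by (rule nn_integral_density[OF dm]) simp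
  also have "\<dots> = (\<integral>\<^sup>+x. S x * ennreal (exp (X*x)) \<partial>lborel)"
    by (rule nn_integral_cong_AE) (use AEeq in auto)
  also have "\<dots> = (\<integral>\<^sup>+x. (\<Sum>n. ennreal (tm n x * exp (X*x))) \<partial>lborel)"
  proof (rule nn_integral_cong)
    fix x
    show "S x * ennreal (exp (X*x)) = (\<Sum>n. ennreal (tm n x * exp (X*x)))"
      unfolding S_def ennreal_suminf_multc[symmetric] by (simp only: ennreal_mult[OF tm0 exp_ge_zero])
  qed
  also have "\<dots> = (\<Sum>n. \<integral>\<^sup>+x. ennreal (tm n x * exp (X*x)) \<partial>lborel)"
    by (rule nn_integral_suminf) simp
  also have "\<dots> = (\<Sum>n. ennreal (exp (- \<Theta>) * \<Theta> ^ n / fact n) * ennreal (D powr (-(\<delta> + real n))))"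
    unfolding D_def by (simp only: int[OF X])
  also have "\<dots> = ennreal (exp (- \<Theta>) * D powr (-\<delta>) * exp (\<Theta> / D))"
    by (rule ncg_series[OF D T])
  also have "exp (- \<Theta>) * D powr (-\<delta>) * exp (\<Theta> / D) = exp (-\<delta> * ncg_w X \<theta> + \<Theta> * ncg_v X \<theta>)"
  proof -
    have "D powr (-\<delta>) = exp (-\<delta> * ln D)" using D by (simp add: powr_def)
    moreover have "- \<Theta> + \<Theta> / D = \<Theta> * (\<theta> * X / D)" using D unfolding D_def by (simp add: field_simps)
    ultimately show ?thesis unfolding ncg_w_def ncg_v_def D_def[symmetric]
      by (simp add: exp_add[symmetric] mult_ac)
  qed
  finally show ?thesis .
qed

lemma (in sigma_finite_subalgebra) nn_cond_exp_SUP: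
  assumes fm[measurable]: "\<And>i. f i \<in> borel_measurable M" and mono: "\<And>i x. f i x \<le> f (Suc i) x"
  shows "AE x in M. nn_cond_exp M F (\<lambda>x. SUP i. f i x) x = (SUP i. nn_cond_exp M F (f i) x)"
proof -
  have AEmono: "AE x in M. nn_cond_exp M F (f i) x \<le> nn_cond_exp M F (f (Suc i)) x" for i
    by (rule nn_cond_exp_mono) (auto simp: mono)
  have "AE x in M. (SUP i. nn_cond_exp M F (f i) x) = nn_cond_exp M F (\<lambda>x. SUP i. f i x) x"
  proof (rule nn_cond_exp_charact)
    fix A assume A[measurable]: "A \<in> sets F"
    then have AM[measurable]: "A \<in> sets M" using subalg by (meson subalgebra_def subsetD)
    have "(\<integral>\<^sup>+x\<in>A. (SUP i. f i x) \<partial>M) = (\<integral>\<^sup>+x. (SUP i. f i x * indicator A x) \<partial>M)"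
      by (simp add: SUP_mult_right_ennreal)
    also have "\<dots> = (SUP i. \<integral>\<^sup>+x. f i x * indicator A x \<partial>M)"
      by (rule nn_integral_monotone_convergence_SUP_AE) (auto intro!: mult_right_mono mono)
    also have "\<dots> = (SUP i. \<integral>\<^sup>+x. nn_cond_exp M F (f i) x * indicator A x \<partial>M)"
    proof -
      have "(\<integral>\<^sup>+x. f i x * indicator A x \<partial>M) = (\<integral>\<^sup>+x. nn_cond_exp M F (f i) x * indicator A x \<partial>M)" for i
      proof -
        have "(\<integral>\<^sup>+x. f i x * indicator A x \<partial>M) = (\<integral>\<^sup>+x. indicator A x * f i x \<partial>M)" by (simp add: mult.commute)
        also have "\<dots> = (\<integral>\<^sup>+x. indicator A x * nn_cond_exp M F (f i) x \<partial>M)"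
          by (rule nn_cond_exp_intg[symmetric]) auto
        finally show ?thesis by (simp add: mult.commute)
      qed
      then show ?thesis by simp
    qed
    also have "\<dots> = (\<integral>\<^sup>+x. (SUP i. nn_cond_exp M F (f i) x * indicator A x) \<partial>M)"
    proof (rule nn_integral_monotone_convergence_SUP_AE[symmetric])
      show "AE x in M. nn_cond_exp M F (f i) x * indicator A x \<le> nn_cond_exp M F (f (Suc i)) x * indicator A x" for i
        using AEmono[of i] by eventually_elim (auto intro: mult_right_mono)
    qed auto
    also have "\<dots> = (\<integral>\<^sup>+x\<in>A. (SUP i. nn_cond_exp M F (f i) x) \<partial>M)"
      by (simp add: SUP_mult_right_ennreal)
    finally show "(\<integral>\<^sup>+x\<in>A. (SUP i. f i x) \<partial>M) = (\<integral>\<^sup>+x\<in>A. (SUP i. nn_cond_exp M F (f i) x) \<partial>M)" .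
  qed auto
  then show ?thesis by (auto elim: AE_mp)
qed

lemma cond_kernel:
  fixes Y :: "'a \<Rightarrow> real" and K :: "'a \<Rightarrow> real measure"
  assumes sf: "sigma_finite_subalgebra M F"
  and Y[measurable]: "Y \<in> borel_measurable M"
  and K: "\<And>\<omega>. sets (K \<omega>) = sets borel"
  and law: "\<And>B. B \<in> sets borel \<Longrightarrow> AE \<omega> in M. nn_cond_exp M F (indicator (Y -` B \<inter> space M)) \<omega> = emeasure (K \<omega>) B"
  and g: "g \<in> borel_measurable borel"
  shows "AE \<omega> in M. nn_cond_exp M F (\<lambda>\<omega>. g (Y \<omega>)) \<omega> = (\<integral>\<^sup>+x. g x \<partial>K \<omega>)"
  using g
proof (induction rule: borel_measurable_induct)
  interpret sigma_finite_subalgebra M F by fact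
  have Km: "h \<in> borel_measurable (K \<omega>)" if "h \<in> borel_measurable borel" for h :: "real \<Rightarrow> ennreal" and \<omega>
    by (subst measurable_cong_sets[OF K[of \<omega>] refl]) (rule that)
  {
    case (cong f g)
    then have "f = g" by auto
    then show ?case using cong by simp
  next
    case (set A)
    have "AE \<omega> in M. nn_cond_exp M F (\<lambda>\<omega>. indicator A (Y \<omega>)) \<omega> = nn_cond_exp M F (indicator (Y -` A \<inter> space M)) \<omega>"
    proof (rule nn_cond_exp_cong)
      have Am[measurable]: "A \<in> sets borel" using set by simp
      have YA: "Y -` A \<inter> space M \<in> sets M" using measurable_sets[OF Y Am] .
      show "AE x in M. indicator A (Y x) = indicator (Y -` A \<inter> space M) x" by (auto simp: indicator_def)
      show "(\<lambda>x. indicator A (Y x) :: ennreal) \<in> borel_measurable M" by measurable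
      show "indicator (Y -` A \<inter> space M) \<in> borel_measurable M" using YA by simp
    qed
    moreover have "AE \<omega> in M. nn_cond_exp M F (indicator (Y -` A \<inter> space M)) \<omega> = emeasure (K \<omega>) A"
      using law set by simp
    ultimately show ?case using set K by (auto elim!: AE_mp)
  next
    case (mult u c)
    have [measurable]: "u \<in> borel_measurable borel" by fact
    have "AE \<omega> in M. c * nn_cond_exp M F (\<lambda>\<omega>. u (Y \<omega>)) \<omega> = nn_cond_exp M F (\<lambda>\<omega>. c * u (Y \<omega>)) \<omega>"
      by (rule nn_cond_exp_prod) auto
    moreover have "AE \<omega> in M. nn_cond_exp M F (\<lambda>\<omega>. u (Y \<omega>)) \<omega> = (\<integral>\<^sup>+x. u x \<partial>K \<omega>)" by fact
    ultimately show ?case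
      by eventually_elim (simp add: nn_integral_cmult Km)
  next
    case (add u v)
    have [measurable]: "u \<in> borel_measurable borel" "v \<in> borel_measurable borel" by fact+
    have "AE \<omega> in M. nn_cond_exp M F (\<lambda>\<omega>. v (Y \<omega>)) \<omega> + nn_cond_exp M F (\<lambda>\<omega>. u (Y \<omega>)) \<omega> = nn_cond_exp M F (\<lambda>\<omega>. v (Y \<omega>) + u (Y \<omega>)) \<omega>"
      by (rule nn_cond_exp_sum) auto
    moreover have "AE \<omega> in M. nn_cond_exp M F (\<lambda>\<omega>. u (Y \<omega>)) \<omega> = (\<integral>\<^sup>+x. u x \<partial>K \<omega>)" by fact
    moreover have "AE \<omega> in M. nn_cond_exp M F (\<lambda>\<omega>. v (Y \<omega>)) \<omega> = (\<integral>\<^sup>+x. v x \<partial>K \<omega>)" by fact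
    ultimately show ?case
      by eventually_elim (simp add: nn_integral_add Km)
  next
    case (seq U)
    have [measurable]: "U i \<in> borel_measurable borel" for i by fact
    have "AE \<omega> in M. nn_cond_exp M F (\<lambda>\<omega>. SUP i. U i (Y \<omega>)) \<omega> = (SUP i. nn_cond_exp M F (\<lambda>\<omega>. U i (Y \<omega>)) \<omega>)"
      by (rule nn_cond_exp_SUP) (measurable, use \<open>incseq U\<close> in \<open>simp add: incseq_Suc_iff le_fun_def\<close>)
    moreover have "AE \<omega> in M. \<forall>i. nn_cond_exp M F (\<lambda>\<omega>. U i (Y \<omega>)) \<omega> = (\<integral>\<^sup>+x. U i x \<partial>K \<omega>)"
      using seq.IH by (simp add: AE_all_countable)
    ultimately show ?case
    proof eventually_elim
      case (elim \<omega>)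
      have "(\<integral>\<^sup>+x. (SUP i. U i) x \<partial>K \<omega>) = (\<integral>\<^sup>+x. (SUP i. U i x) \<partial>K \<omega>)" by (simp only: SUP_apply)
      also have "\<dots> = (SUP i. \<integral>\<^sup>+x. U i x \<partial>K \<omega>)"
        by (rule nn_integral_monotone_convergence_SUP[OF \<open>incseq U\<close>]) (rule Km, measurable)
      finally have 1: "(\<integral>\<^sup>+x. (SUP i. U i) x \<partial>K \<omega>) = (SUP i. \<integral>\<^sup>+x. U i x \<partial>K \<omega>)" .
      have eqf: "(\<lambda>\<omega>. (SUP i. U i) (Y \<omega>)) = (\<lambda>\<omega>. SUP i. U i (Y \<omega>))" by (simp only: SUP_apply)
      show ?case unfolding eqf 1 using elim by simp
    qed
  }
qed

lemma cond_indep: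
  fixes Y e :: "'a \<Rightarrow> real" and g :: "real \<times> real \<Rightarrow> ennreal"
  assumes P: "prob_space M" and sub: "subalgebra M G"
  and Y[measurable]: "Y \<in> borel_measurable G" and e[measurable]: "e \<in> borel_measurable M"
  and ind: "prob_space.indep_set M (sets G) {e -` B \<inter> space M | B. B \<in> sets borel}"
  and g[measurable]: "g \<in> borel_measurable (borel \<Otimes>\<^sub>M borel)"
  shows "AE \<omega> in M. nn_cond_exp M G (\<lambda>\<omega>. g (Y \<omega>, e \<omega>)) \<omega> = (\<integral>\<^sup>+x. g (Y \<omega>, x) \<partial>distr M borel e)"
proof -
  interpret prob_space M by fact
  interpret finite_measure_subalgebra M G by unfold_locales (rule sub)
  define N where "N = distr M borel e"
  interpret N: prob_space N unfolding N_def by (rule prob_space_distr) simp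
  have sN[simp]: "sets N = sets borel" unfolding N_def by simp
  have YM[measurable]: "Y \<in> borel_measurable M" by (rule measurable_from_subalg[OF sub Y])
  define \<psi> where "\<psi> = (\<lambda>y. \<integral>\<^sup>+x. g (y, x) \<partial>N)"
  have \<psi>m[measurable]: "\<psi> \<in> borel_measurable borel"
    unfolding \<psi>_def
  proof (rule N.borel_measurable_nn_integral)
    show "case_prod (\<lambda>y x. g (y, x)) \<in> borel_measurable (borel \<Otimes>\<^sub>M N)"
      by (subst measurable_cong_sets[OF sets_pair_measure_cong[OF refl sN] refl]) simp
  qed
  have "AE \<omega> in M. \<psi> (Y \<omega>) = nn_cond_exp M G (\<lambda>\<omega>. g (Y \<omega>, e \<omega>)) \<omega>"
  proof (rule nn_cond_exp_charact)
    fix A assume A[measurable]: "A \<in> sets G"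
    then have AM[measurable]: "A \<in> sets M" using sub by (meson subalgebra_def subsetD)
    define W where "W = (\<lambda>\<omega>. (indicator A \<omega> :: real, Y \<omega>, 0::real))"
    define E where "E = (\<lambda>\<omega>. (0::real, 0::real, e \<omega>))"
    have WG: "W \<in> measurable G (borel \<Otimes>\<^sub>M borel \<Otimes>\<^sub>M borel)" unfolding W_def by measurable
    have WM[measurable]: "W \<in> measurable M (borel \<Otimes>\<^sub>M borel \<Otimes>\<^sub>M borel)" by (rule measurable_from_subalg[OF sub WG])
    have EM[measurable]: "E \<in> measurable M (borel \<Otimes>\<^sub>M borel \<Otimes>\<^sub>M borel)" unfolding E_def by measurable
    define \<phi> where "\<phi> = (\<lambda>z::(real \<times> real \<times> real) \<times> (real \<times> real \<times> real).
        ennreal (fst (fst z)) * g (fst (snd (fst z)), snd (snd (snd z))))"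
    have \<phi>m[measurable]: "\<phi> \<in> borel_measurable ((borel \<Otimes>\<^sub>M borel \<Otimes>\<^sub>M borel) \<Otimes>\<^sub>M (borel \<Otimes>\<^sub>M borel \<Otimes>\<^sub>M borel))" unfolding \<phi>_def by measurable
    have iv: "indep_var (borel \<Otimes>\<^sub>M borel \<Otimes>\<^sub>M borel) W (borel \<Otimes>\<^sub>M borel \<Otimes>\<^sub>M borel) E"
      unfolding indep_var_def indep_vars_def2
    proof
      show "\<forall>i\<in>UNIV. random_variable (case_bool (borel \<Otimes>\<^sub>M borel \<Otimes>\<^sub>M borel) (borel \<Otimes>\<^sub>M borel \<Otimes>\<^sub>M borel) i) (case_bool W E i)"
        by (auto split: bool.split)
      show "indep_sets (\<lambda>i. {case_bool W E i -` A \<inter> space M |A. A \<in> sets (case_bool (borel \<Otimes>\<^sub>M borel \<Otimes>\<^sub>M borel) (borel \<Otimes>\<^sub>M borel \<Otimes>\<^sub>M borel) i)}) UNIV"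
      proof (rule indep_sets_mono_sets)
        show "indep_sets (case_bool (sets G) {e -` B \<inter> space M | B. B \<in> sets borel}) UNIV"
          using ind unfolding indep_set_def .
        fix i :: bool
        show "{case_bool W E i -` A \<inter> space M |A. A \<in> sets (case_bool (borel \<Otimes>\<^sub>M borel \<Otimes>\<^sub>M borel) (borel \<Otimes>\<^sub>M borel \<Otimes>\<^sub>M borel) i)}
            \<subseteq> case_bool (sets G) {e -` B \<inter> space M | B. B \<in> sets borel} i"
        proof (cases i)
          case True
          have "W -` B \<inter> space M \<in> sets G" if "B \<in> sets (borel \<Otimes>\<^sub>M borel \<Otimes>\<^sub>M borel)" for B
            using measurable_sets[OF WG that] sub by (simp add: subalgebra_def)
          then show ?thesis using True by auto
        next
          case False
          have "\<exists>C. E -` B \<inter> space M = e -` C \<inter> space M \<and> C \<in> sets borel" if B: "B \<in> sets (borel \<Otimes>\<^sub>M borel \<Otimes>\<^sub>M borel)" for B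
          proof (intro exI conjI)
            have "(\<lambda>x::real. (0::real, 0::real, x)) \<in> measurable borel (borel \<Otimes>\<^sub>M borel \<Otimes>\<^sub>M borel)" by measurable
            then show "(\<lambda>x::real. (0::real, 0::real, x)) -` B \<in> sets borel"
              using measurable_sets_borel[OF _ B] by blast
            show "E -` B \<inter> space M = e -` ((\<lambda>x::real. (0::real, 0::real, x)) -` B) \<inter> space M"
              unfolding E_def by auto
          qed
          then show ?thesis using False by auto
        qed
      qed
    qed
    have "(\<integral>\<^sup>+\<omega>\<in>A. g (Y \<omega>, e \<omega>) \<partial>M) = (\<integral>\<^sup>+\<omega>. \<phi> (W \<omega>, E \<omega>) \<partial>M)"
      by (rule nn_integral_cong) (simp add: \<phi>_def W_def E_def indicator_def)
    also have "\<dots> = (\<integral>\<^sup>+z. \<phi> z \<partial>distr M ((borel \<Otimes>\<^sub>M borel \<Otimes>\<^sub>M borel) \<Otimes>\<^sub>M (borel \<Otimes>\<^sub>M borel \<Otimes>\<^sub>M borel)) (\<lambda>\<omega>. (W \<omega>, E \<omega>)))"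
      by (rule nn_integral_distr[symmetric]) auto
    also have "distr M ((borel \<Otimes>\<^sub>M borel \<Otimes>\<^sub>M borel) \<Otimes>\<^sub>M (borel \<Otimes>\<^sub>M borel \<Otimes>\<^sub>M borel)) (\<lambda>\<omega>. (W \<omega>, E \<omega>)) = distr M (borel \<Otimes>\<^sub>M borel \<Otimes>\<^sub>M borel) W \<Otimes>\<^sub>M distr M (borel \<Otimes>\<^sub>M borel \<Otimes>\<^sub>M borel) E"
      using iv by (simp add: indep_var_distribution_eq)
    also have "(\<integral>\<^sup>+z. \<phi> z \<partial>(distr M (borel \<Otimes>\<^sub>M borel \<Otimes>\<^sub>M borel) W \<Otimes>\<^sub>M distr M (borel \<Otimes>\<^sub>M borel \<Otimes>\<^sub>M borel) E)) = (\<integral>\<^sup>+w. \<integral>\<^sup>+x. \<phi> (w, x) \<partial>distr M (borel \<Otimes>\<^sub>M borel \<Otimes>\<^sub>M borel) E \<partial>distr M (borel \<Otimes>\<^sub>M borel \<Otimes>\<^sub>M borel) W)"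
    proof -
      interpret NE: prob_space "distr M (borel \<Otimes>\<^sub>M borel \<Otimes>\<^sub>M borel) E" by (rule prob_space_distr) simp
      show ?thesis
        by (rule NE.nn_integral_fst[symmetric])
           (subst measurable_cong_sets[OF sets_pair_measure_cong[OF sets_distr sets_distr] refl], rule \<phi>m)
    qed
    also have "\<dots> = (\<integral>\<^sup>+\<omega>. \<integral>\<^sup>+x. \<phi> (W \<omega>, x) \<partial>distr M (borel \<Otimes>\<^sub>M borel \<Otimes>\<^sub>M borel) E \<partial>M)"
    proof (rule nn_integral_distr)
      interpret NE: prob_space "distr M (borel \<Otimes>\<^sub>M borel \<Otimes>\<^sub>M borel) E" by (rule prob_space_distr) simp
      show "(\<lambda>w. \<integral>\<^sup>+x. \<phi> (w, x) \<partial>distr M (borel \<Otimes>\<^sub>M borel \<Otimes>\<^sub>M borel) E) \<in> borel_measurable (distr M (borel \<Otimes>\<^sub>M borel \<Otimes>\<^sub>M borel) W)"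
        by (subst measurable_cong_sets[OF sets_distr refl]) (rule NE.borel_measurable_nn_integral, 
            subst measurable_cong_sets[OF sets_pair_measure_cong[OF refl sets_distr] refl], simp)
    qed simp
    also have "\<dots> = (\<integral>\<^sup>+\<omega>\<in>A. \<psi> (Y \<omega>) \<partial>M)"
    proof (rule nn_integral_cong)
      fix \<omega>
      have "(\<integral>\<^sup>+x. \<phi> (W \<omega>, x) \<partial>distr M (borel \<Otimes>\<^sub>M borel \<Otimes>\<^sub>M borel) E) = (\<integral>\<^sup>+\<omega>'. \<phi> (W \<omega>, E \<omega>') \<partial>M)"
      proof (rule nn_integral_distr)
        have "(\<lambda>x. \<phi> (W \<omega>, x)) = (\<lambda>x. ennreal (fst (W \<omega>)) * g (fst (snd (W \<omega>)), snd (snd x)))"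
          unfolding \<phi>_def by simp
        also have "\<dots> \<in> borel_measurable (borel \<Otimes>\<^sub>M borel \<Otimes>\<^sub>M borel)" by measurable
        finally show "(\<lambda>x. \<phi> (W \<omega>, x)) \<in> borel_measurable (distr M (borel \<Otimes>\<^sub>M borel \<Otimes>\<^sub>M borel) E)"
          by simp
      qed simp
      also have "\<dots> = (\<integral>\<^sup>+\<omega>'. ennreal (indicator A \<omega>) * g (Y \<omega>, e \<omega>') \<partial>M)"
        by (simp add: \<phi>_def W_def E_def)
      also have "\<dots> = (\<integral>\<^sup>+x. ennreal (indicator A \<omega>) * g (Y \<omega>, x) \<partial>N)"
        unfolding N_def by (rule nn_integral_distr[symmetric]) auto
      also have "\<dots> = ennreal (indicator A \<omega>) * \<psi> (Y \<omega>)"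
        unfolding \<psi>_def by (rule nn_integral_cmult) (simp add: N_def)
      finally show "(\<integral>\<^sup>+x. \<phi> (W \<omega>, x) \<partial>distr M (borel \<Otimes>\<^sub>M borel \<Otimes>\<^sub>M borel) E) = \<psi> (Y \<omega>) * indicator A \<omega>"
        by (simp add: mult.commute split: split_indicator)
    qed
    finally show "(\<integral>\<^sup>+\<omega>\<in>A. g (Y \<omega>, e \<omega>) \<partial>M) = (\<integral>\<^sup>+\<omega>\<in>A. \<psi> (Y \<omega>) \<partial>M)" .
  qed auto
  then show ?thesis unfolding \<psi>_def N_def by (auto elim: AE_mp)
qed

lemma sigma_gen_subalg:
  assumes "gen \<subseteq> sets M" shows "subalgebra M (sigma (space M) gen)"
proof -
  have P: "gen \<subseteq> Pow (space M)" using assms sets.sets_into_space by blast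
  show ?thesis unfolding subalgebra_def
    using sets.sigma_sets_subset[OF assms] P by (simp add: sets_measure_of space_measure_of_conv)
qed

lemma sigma_gen_subalg2:
  assumes "gen1 \<subseteq> gen2" "gen2 \<subseteq> Pow \<Omega>" shows "subalgebra (sigma \<Omega> gen2) (sigma \<Omega> gen1)"
  unfolding subalgebra_def using assms sigma_sets_mono'[OF assms(1)]
  by (simp add: sets_measure_of space_measure_of_conv)

lemma rv_events_sets: "X \<in> borel_measurable M \<Longrightarrow> rv_events M X \<subseteq> sets M"
  unfolding rv_events_def by (auto intro: measurable_sets)

lemma meas_sigma:
  assumes "rv_events M X \<subseteq> gen" "gen \<subseteq> Pow (space M)"
  shows "X \<in> borel_measurable (sigma (space M) gen)"
proof (rule measurableI)
  fix A :: "real set" assume "A \<in> sets borel"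
  then have "X -` A \<inter> space M \<in> gen" using assms(1) unfolding rv_events_def by auto
  then show "X -` A \<inter> space (sigma (space M) gen) \<in> sets (sigma (space M) gen)"
    using assms(2) by (simp add: sets_measure_of space_measure_of_conv)
qed simp

lemma gauss_step:
  fixes y z r lam b c \<gamma> :: real
  assumes y: "y \<ge> 0" and c: "1 - 2*c > 0"
  defines "X \<equiv> z * lam + b + ((1/2) * z\<^sup>2 + \<gamma>\<^sup>2 * c - 2 * c * \<gamma> * z) / (1 - 2 * c)"
  shows "(\<integral>\<^sup>+x. ennreal (exp (z*r + (z*lam + b)*y + z* sqrt y*x + c*(x - \<gamma>* sqrt y)\<^sup>2)) \<partial>density lborel std_normal_density)
    = ennreal (exp (z*r - 1/2 * ln (1 - 2*c) + X * y))"
proof -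
  define a where "a = sqrt y"
  have a2: "a^2 = y" unfolding a_def using y by simp
  have a0: "a \<ge> 0" unfolding a_def using y by simp
  define b' where "b' = a * (z - 2*c*\<gamma>)"
  define K where "K = z*r + (z*lam + b)*y + c*\<gamma>^2*y"
  have pt: "exp (z*r + (z*lam + b)*y + z* sqrt y*x + c*(x - \<gamma>* sqrt y)\<^sup>2) = exp K * exp (b'*x + c*x^2)" for x
  proof -
    have "z*r + (z*lam + b)*y + z* sqrt y*x + c*(x - \<gamma>* sqrt y)\<^sup>2 = K + (b'*x + c*x^2)"
      unfolding K_def b'_def a_def[symmetric] a2[symmetric] using a0 by (simp add: power2_eq_square algebra_simps)
    then show ?thesis by (simp add: exp_add)
  qed
  have "(\<integral>\<^sup>+x. ennreal (exp (z*r + (z*lam + b)*y + z* sqrt y*x + c*(x - \<gamma>* sqrt y)\<^sup>2)) \<partial>density lborel std_normal_density)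
      = (\<integral>\<^sup>+x. ennreal (std_normal_density x) * ennreal (exp (z*r + (z*lam + b)*y + z* sqrt y*x + c*(x - \<gamma>* sqrt y)\<^sup>2)) \<partial>lborel)"
    by (rule nn_integral_density) auto
  also have "\<dots> = (\<integral>\<^sup>+x. ennreal (exp K) * ennreal (std_normal_density x * exp (b'*x + c*x^2)) \<partial>lborel)"
  proof (intro nn_integral_cong)
    fix x
    have "ennreal (std_normal_density x) * ennreal (exp (z*r + (z*lam + b)*y + z * sqrt y*x + c*(x - \<gamma>* sqrt y)\<^sup>2))
        = ennreal (std_normal_density x * exp (z*r + (z*lam + b)*y + z * sqrt y*x + c*(x - \<gamma>* sqrt y)\<^sup>2))"
      by (rule ennreal_mult[symmetric]) (simp_all add: normal_density_nonneg)
    also have "\<dots> = ennreal (exp K * (std_normal_density x * exp (b'*x + c*x^2)))"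
      unfolding pt by (simp only: mult_ac)
    also have "\<dots> = ennreal (exp K) * ennreal (std_normal_density x * exp (b'*x + c*x^2))"
      by (rule ennreal_mult) (simp_all add: normal_density_nonneg)
    finally show "ennreal (std_normal_density x) * ennreal (exp (z*r + (z*lam + b)*y + z * sqrt y*x + c*(x - \<gamma>* sqrt y)\<^sup>2))
        = ennreal (exp K) * ennreal (std_normal_density x * exp (b'*x + c*x^2))" .
  qed
  also have "\<dots> = ennreal (exp K) * ennreal (exp (b'^2/(2*(1-2*c))) / sqrt(1-2*c))"
    using gauss_mgf[of c b'] c by (simp add: nn_integral_cmult)
  also have "\<dots> = ennreal (exp (z*r - 1/2 * ln (1 - 2*c) + X * y))"
  proof -
    have sq: "1 / sqrt (1 - 2*c) = exp (- 1/2 * ln (1 - 2*c))"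
    proof -
      have "sqrt (1 - 2*c) = (1 - 2*c) powr (1/2)" using c by (simp add: powr_half_sqrt)
      also have "\<dots> = exp (1/2 * ln (1 - 2*c))" using c by (simp add: powr_def)
      finally have s: "sqrt (1 - 2*c) = exp (1/2 * ln (1 - 2*c))" .
      have m: "- 1/2 * ln (1 - 2*c) = - (1/2 * ln (1 - 2*c))" by simp
      show ?thesis using m s by (metis exp_minus inverse_eq_divide)
    qed
    have e: "K + b'^2/(2*(1-2*c)) = z*r + X * y"
    proof -
      have "b'^2 = y * (z - 2*c*\<gamma>)^2" unfolding b'_def using a2 by (simp add: power_mult_distrib)
      then have "K + b'^2/(2*(1-2*c)) = z*r + y * (z*lam + b + c*\<gamma>^2 + (z - 2*c*\<gamma>)^2/(2*(1-2*c)))"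
        unfolding K_def by (simp add: algebra_simps)
      also have "(z*lam + b + c*\<gamma>^2 + (z - 2*c*\<gamma>)^2/(2*(1-2*c))) = X"
      proof -
        define D where "D = 1 - 2*c"
        have D: "D > 0" using c D_def by simp
        have cD: "c = (1 - D)/2" unfolding D_def by simp
        show ?thesis unfolding X_def D_def[symmetric] unfolding cD using D
          by (simp add: field_simps power2_eq_square)
      qed
      finally show ?thesis by simp
    qed
    have "exp K * (exp (b'^2/(2*(1-2*c))) / sqrt(1-2*c)) = exp (z*r - 1/2 * ln (1 - 2*c) + X * y)"
    proof -
      have "exp K * (exp (b'^2/(2*(1-2*c))) / sqrt(1-2*c)) = exp (K + b'^2/(2*(1-2*c))) * (1 / sqrt(1-2*c))"
        by (simp add: exp_add)
      also have "\<dots> = exp (K + b'^2/(2*(1-2*c))) * exp (- 1/2 * ln (1 - 2*c))" by (simp only: sq)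
      also have "\<dots> = exp (K + b'^2/(2*(1-2*c)) + - 1/2 * ln (1 - 2*c))" by (simp only: exp_add)
      also have "\<dots> = exp (z*r - 1/2 * ln (1 - 2*c) + X * y)" unfolding e by (simp add: algebra_simps)
      finally show ?thesis .
    qed
    then show ?thesis using c by (simp add: ennreal_mult[symmetric])
  qed
  finally show ?thesis .
qed

lemma step_star:
  fixes M F G :: "'a measure" and R e Th :: "'a \<Rightarrow> real" and z lam b \<gamma> c r \<delta> \<theta> :: real
  assumes P: "prob_space M" and subG: "subalgebra M G" and subF: "subalgebra G F"
  and Rm[measurable]: "R \<in> borel_measurable G" and Rpos: "\<And>\<omega>. \<omega> \<in> space M \<Longrightarrow> R \<omega> > 0"
  and em[measurable]: "e \<in> borel_measurable M"
  and ind: "prob_space.indep_set M (sets G) {e -` B \<inter> space M | B. B \<in> sets borel}"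
  and norm: "distributed M lborel e std_normal_density"
  and law: "\<And>B. B \<in> sets borel \<Longrightarrow> AE \<omega> in M. nn_cond_exp M F (indicator (R -` B \<inter> space M)) \<omega> = emeasure (ncgamma \<delta> (Th \<omega>) \<theta>) B"
  and Th: "\<And>\<omega>. \<omega> \<in> space M \<Longrightarrow> Th \<omega> \<ge> 0"
  and d: "\<delta> > 0" and th: "\<theta> > 0" and c: "1 - 2*c > 0"
  defines "X \<equiv> z * lam + b + ((1/2) * z\<^sup>2 + \<gamma>\<^sup>2 * c - 2 * c * \<gamma> * z) / (1 - 2 * c)"
  assumes X: "\<theta> * X < 1"
  shows "AE \<omega> in M. nn_cond_exp M F (\<lambda>\<omega>. ennreal (exp (z*r + (z*lam + b)*R \<omega> + z * sqrt (R \<omega>) * e \<omega> + c*(e \<omega> - \<gamma> * sqrt (R \<omega>))\<^sup>2))) \<omega>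
     = ennreal (exp (z*r - 1/2 * ln (1 - 2*c) - \<delta> * ncg_w X \<theta> + Th \<omega> * ncg_v X \<theta>))"
proof -
  interpret prob_space M by fact
  have subMF: "subalgebra M F" using subG subF unfolding subalgebra_def by auto
  interpret finite_measure_subalgebra M F by unfold_locales (rule subMF)
  have RM[measurable]: "R \<in> borel_measurable M" by (rule measurable_from_subalg[OF subG Rm])
  define g where "g = (\<lambda>(y, x). ennreal (exp (z*r + (z*lam + b)*y + z * sqrt y * x + c*(x - \<gamma> * sqrt y)\<^sup>2)))"
  have gm[measurable]: "g \<in> borel_measurable (borel \<Otimes>\<^sub>M borel)" unfolding g_def by measurable
  define f where "f = (\<lambda>\<omega>. g (R \<omega>, e \<omega>))"
  have fm[measurable]: "f \<in> borel_measurable M" unfolding f_def by measurable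
  define h where "h = (\<lambda>y. ennreal (exp (z*r - 1/2 * ln (1 - 2*c) + X * y)))"
  have hm[measurable]: "h \<in> borel_measurable borel" unfolding h_def by measurable
  have dist: "distr M borel e = density lborel std_normal_density"
  proof -
    have "distr M borel e = distr M lborel e" by (rule distr_cong) auto
    then show ?thesis using norm unfolding distributed_def by simp
  qed
  have A1: "AE \<omega> in M. nn_cond_exp M F f \<omega> = nn_cond_exp M F (nn_cond_exp M G f) \<omega>"
    by (rule nn_cond_exp_nested_subalg[OF subG subF fm])
  have A2: "AE \<omega> in M. nn_cond_exp M G f \<omega> = h (R \<omega>)"
  proof -
    have "AE \<omega> in M. nn_cond_exp M G (\<lambda>\<omega>. g (R \<omega>, e \<omega>)) \<omega> = (\<integral>\<^sup>+x. g (R \<omega>, x) \<partial>distr M borel e)"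
      by (rule cond_indep[OF P subG Rm em ind gm])
    then show ?thesis
    proof (rule AE_mp, intro AE_I2 impI)
      fix \<omega> assume \<omega>: "\<omega> \<in> space M"
        and eq: "nn_cond_exp M G (\<lambda>\<omega>. g (R \<omega>, e \<omega>)) \<omega> = (\<integral>\<^sup>+x. g (R \<omega>, x) \<partial>distr M borel e)"
      have "(\<integral>\<^sup>+x. g (R \<omega>, x) \<partial>distr M borel e) = h (R \<omega>)"
        unfolding dist g_def h_def X_def using gauss_step[of "R \<omega>" c z r lam b \<gamma>] Rpos[OF \<omega>] c by simp
      then show "nn_cond_exp M G f \<omega> = h (R \<omega>)" using eq unfolding f_def by simp
    qed
  qed
  have A3: "AE \<omega> in M. nn_cond_exp M F (nn_cond_exp M G f) \<omega> = nn_cond_exp M F (\<lambda>\<omega>. h (R \<omega>)) \<omega>"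
    by (rule nn_cond_exp_cong[OF A2]) auto
  have A4: "AE \<omega> in M. nn_cond_exp M F (\<lambda>\<omega>. h (R \<omega>)) \<omega> = (\<integral>\<^sup>+x. h x \<partial>ncgamma \<delta> (Th \<omega>) \<theta>)"
    by (rule cond_kernel[OF _ RM _ law hm]) (auto simp: ncgamma_def sigma_finite_subalgebra_axioms)
  show ?thesis
    using AE_space A1 A3 A4
  proof (eventually_elim)
    case (elim \<omega>)
    have "(\<integral>\<^sup>+x. h x \<partial>ncgamma \<delta> (Th \<omega>) \<theta>)
        = (\<integral>\<^sup>+x. ennreal (exp (z*r - 1/2 * ln (1 - 2*c))) * ennreal (exp (X * x)) \<partial>ncgamma \<delta> (Th \<omega>) \<theta>)"
      unfolding h_def by (simp add: exp_add ennreal_mult)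
    also have "\<dots> = ennreal (exp (z*r - 1/2 * ln (1 - 2*c))) * (\<integral>\<^sup>+x. ennreal (exp (X * x)) \<partial>ncgamma \<delta> (Th \<omega>) \<theta>)"
      by (rule nn_integral_cmult) (simp add: ncgamma_def)
    also have "\<dots> = ennreal (exp (z*r - 1/2 * ln (1 - 2*c))) * ennreal (exp (-\<delta> * ncg_w X \<theta> + Th \<omega> * ncg_v X \<theta>))"
      using ncgamma_mgf[OF d th Th[OF elim(1)] X] by simp
    also have "\<dots> = ennreal (exp (z*r - 1/2 * ln (1 - 2*c) - \<delta> * ncg_w X \<theta> + Th \<omega> * ncg_v X \<theta>))"
      by (simp add: ennreal_mult[symmetric] exp_add[symmetric] algebra_simps)
    finally show ?case using elim unfolding f_def g_def by simp
  qed
qed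

lemma shift_sum:
  fixes Bk Bn \<beta> :: "nat \<Rightarrow> real" and f :: "int \<Rightarrow> real" and v :: real and a :: int
  assumes p: "p \<ge> 1"
    and Bn: "\<And>i. Bn i = (if 1 \<le> i \<and> i < p then Bk (i+1) + v * \<beta> i else if i = p then v * \<beta> p else 0)"
  shows "(\<Sum>i\<in>{2..p}. Bk i * f (a + 1 - int i)) + v * (\<Sum>i=1..p. \<beta> i * f (a - int i))
       = (\<Sum>i=1..p. Bn i * f (a - int i))"
proof -
  obtain p' where p': "p = Suc p'" using p by (cases p) auto
  have L1: "(\<Sum>i\<in>{2..p}. Bk i * f (a + 1 - int i)) = (\<Sum>i=1..p'. Bk (i+1) * f (a - int i))"
  proof -
    have e: "{2..p} = {Suc 1..Suc p'}" using p' by simp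
    have "(\<Sum>i\<in>{2..p}. Bk i * f (a + 1 - int i)) = (\<Sum>i\<in>{Suc 1..Suc p'}. Bk i * f (a + 1 - int i))"
      by (simp only: e)
    also have "\<dots> = (\<Sum>i=1..p'. Bk (Suc i) * f (a + 1 - int (Suc i)))"
      by (rule sum.shift_bounds_cl_Suc_ivl)
    finally show ?thesis by simp
  qed
  have L2: "(\<Sum>i=1..p. \<beta> i * f (a - int i)) = (\<Sum>i=1..p'. \<beta> i * f (a - int i)) + \<beta> p * f (a - int p)"
    using p' by simp
  have R: "(\<Sum>i=1..p. Bn i * f (a - int i)) = (\<Sum>i=1..p'. (Bk (i+1) + v * \<beta> i) * f (a - int i)) + v * \<beta> p * f (a - int p)"
  proof -
    have "(\<Sum>i=1..p. Bn i * f (a - int i)) = (\<Sum>i=1..p'. Bn i * f (a - int i)) + Bn p * f (a - int p)"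
      using p' by simp
    also have "(\<Sum>i=1..p'. Bn i * f (a - int i)) = (\<Sum>i=1..p'. (Bk (i+1) + v * \<beta> i) * f (a - int i))"
      by (rule sum.cong) (auto simp: Bn p')
    also have "Bn p = v * \<beta> p" by (simp add: Bn)
    finally show ?thesis .
  qed
  show ?thesis unfolding L1 L2 R
    by (simp add: algebra_simps sum.distrib sum_distrib_left)
qed

lemma sum_split1: "(1::nat) \<le> p \<Longrightarrow> (\<Sum>i=1..p. g i) = g 1 + (\<Sum>i\<in>{2..p}. g i)"
  by (metis Suc_1 sum.atLeast_Suc_atMost)

theorem proposition2:
  fixes M :: "'a measure"
    and eps RV S :: "int \<Rightarrow> 'a \<Rightarrow> real"
    and r lam \<delta> \<theta> d \<gamma> z :: real
    and p q :: nat
    and \<beta> \<alpha> :: "nat \<Rightarrow> real"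
    and t T :: int
  assumes prob: "prob_space M"
    and par: "\<delta> > 0" "\<theta> > 0" "d \<ge> 0" "p \<ge> 1" "q \<ge> 1"
    and beta_nn: "\<And>i. 1 \<le> i \<Longrightarrow> i \<le> p \<Longrightarrow> \<beta> i \<ge> 0"
    and alpha_nn: "\<And>j. 1 \<le> j \<Longrightarrow> j \<le> q \<Longrightarrow> \<alpha> j \<ge> 0"
    and eps_meas: "\<And>u. eps u \<in> borel_measurable M"
    and RV_meas: "\<And>u. RV u \<in> borel_measurable M"
    and eps_indep: "prob_space.indep_vars M (\<lambda>_. borel) eps UNIV"
    and eps_normal: "\<And>u. distributed M lborel (eps u) std_normal_density"
    and RV_pos: "\<And>u \<omega>. \<omega> \<in> space M \<Longrightarrow> RV u \<omega> > 0"
    and S_pos: "\<And>u \<omega>. \<omega> \<in> space M \<Longrightarrow> S u \<omega> > 0"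
    and S_ret: "\<And>u \<omega>. \<omega> \<in> space M \<Longrightarrow>
        ln (S (u + 1) \<omega> / S u \<omega>) = r + lam * RV (u + 1) \<omega> + sqrt (RV (u + 1) \<omega>) * eps (u + 1) \<omega>"
    and eps_indep_past: "\<And>u. prob_space.indep_set M
        (sets (sigma (space M) (sets (lharg_filtration M eps RV u) \<union> rv_events M (RV (u + 1)))))
        (rv_events M (eps (u + 1)))"
    and RV_cond_law: "\<And>u B. B \<in> sets borel \<Longrightarrow>
        AE \<omega> in M. nn_cond_exp M (lharg_filtration M eps RV u)
                       (indicator (RV (u + 1) -` B \<inter> space M)) \<omega>
                 = emeasure (ncgamma \<delta> (lharg_Theta d \<gamma> p q \<beta> \<alpha> eps RV u \<omega>) \<theta>) B"
    and tT: "t < T"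
    and cond1: "\<And>k. k < nat (T - t) \<Longrightarrow>
        1 - 2 * snd (snd (lharg_coef r lam \<delta> \<theta> d \<gamma> p q \<beta> \<alpha> z k)) 1 > 0"
    and cond2: "\<And>k. k < nat (T - t) \<Longrightarrow>
        \<theta> * lharg_X lam \<gamma> z (lharg_coef r lam \<delta> \<theta> d \<gamma> p q \<beta> \<alpha> z k) < 1"
  shows "AE \<omega> in M.
           nn_cond_exp M (lharg_filtration M eps RV t)
             (\<lambda>\<omega>. ennreal (exp (z * ln (S T \<omega> / S t \<omega>)))) \<omega>
         = ennreal (exp (fst (lharg_coef r lam \<delta> \<theta> d \<gamma> p q \<beta> \<alpha> z (nat (T - t)))
              + (\<Sum>i=1..p. fst (snd (lharg_coef r lam \<delta> \<theta> d \<gamma> p q \<beta> \<alpha> z (nat (T - t)))) i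
                              * RV (t + 1 - int i) \<omega>)
              + (\<Sum>j=1..q. snd (snd (lharg_coef r lam \<delta> \<theta> d \<gamma> p q \<beta> \<alpha> z (nat (T - t)))) j
                              * leverage \<gamma> eps RV (t + 1 - int j) \<omega>)))"
proof -
  interpret prob_space M by (rule prob)
  note [measurable] = eps_meas RV_meas
  define F where "F = lharg_filtration M eps RV"
  define gen where "gen = (\<lambda>u::int. \<Union>v\<in>{..u}. rv_events M (eps v) \<union> rv_events M (RV v))"
  have Fdef: "F u = sigma (space M) (gen u)" for u unfolding F_def lharg_filtration_def gen_def ..
  have gen_sets: "gen u \<subseteq> sets M" for u
    unfolding gen_def using rv_events_sets[OF eps_meas] rv_events_sets[OF RV_meas] by blast
  have genP: "gen u \<subseteq> Pow (space M)" for u using gen_sets[of u] sets.sets_into_space by blast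
  have subF: "subalgebra M (F u)" for u unfolding Fdef by (rule sigma_gen_subalg[OF gen_sets])
  have sfF: "sigma_finite_subalgebra M (F u)" for u
  proof -
    interpret finite_measure_subalgebra M "F u" by unfold_locales (rule subF)
    show ?thesis by (rule sigma_finite_subalgebra_axioms)
  qed
  have subFF: "subalgebra (F (u+1)) (F u)" for u
    unfolding Fdef by (rule sigma_gen_subalg2[OF _ genP]) (unfold gen_def, force)
  have epsF: "eps v \<in> borel_measurable (F u)" if "v \<le> u" for u v
    unfolding Fdef by (rule meas_sigma[OF _ genP]) (use that in \<open>auto simp: gen_def\<close>)
  have RVF: "RV v \<in> borel_measurable (F u)" if "v \<le> u" for u v
    unfolding Fdef by (rule meas_sigma[OF _ genP]) (use that in \<open>auto simp: gen_def\<close>)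
  have levF: "(\<lambda>\<omega>. leverage \<gamma> eps RV v \<omega>) \<in> borel_measurable (F u)" if "v \<le> u" for u v
  proof -
    have [measurable]: "eps v \<in> borel_measurable (F u)" "RV v \<in> borel_measurable (F u)"
      using that by (auto intro: epsF RVF)
    show ?thesis unfolding leverage_def by measurable
  qed
  have FM: "h \<in> borel_measurable (F u) \<Longrightarrow> h \<in> borel_measurable M" for h :: "'a \<Rightarrow> real" and u
    by (rule measurable_from_subalg[OF subF])
  define Gs where "Gs = (\<lambda>u. sigma (space M) (sets (F u) \<union> rv_events M (RV (u+1))))"
  have GsP: "sets (F u) \<union> rv_events M (RV (u+1)) \<subseteq> sets M" for u
    using subF[of u] rv_events_sets[OF RV_meas] unfolding subalgebra_def by blast
  have subG: "subalgebra M (Gs u)" for u unfolding Gs_def by (rule sigma_gen_subalg[OF GsP])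
  have subGF: "subalgebra (Gs u) (F u)" for u
  proof -
    have P: "sets (F u) \<union> rv_events M (RV (u+1)) \<subseteq> Pow (space M)"
      using GsP[of u] sets.sets_into_space by blast
    show ?thesis unfolding subalgebra_def Gs_def using subF[of u] P
      by (auto simp: sets_measure_of space_measure_of_conv subalgebra_def)
  qed
  have RVG: "RV (u+1) \<in> borel_measurable (Gs u)" for u
  proof -
    have P: "sets (F u) \<union> rv_events M (RV (u+1)) \<subseteq> Pow (space M)"
      using GsP[of u] sets.sets_into_space by blast
    show ?thesis unfolding Gs_def by (rule meas_sigma[OF _ P]) auto
  qed
  define Th where "Th = (\<lambda>u. lharg_Theta d \<gamma> p q \<beta> \<alpha> eps RV u)"
  have Th0: "Th u \<omega> \<ge> 0" if "\<omega> \<in> space M" for u \<omega>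
    unfolding Th_def lharg_Theta_def leverage_def using par beta_nn alpha_nn RV_pos[OF that, THEN less_imp_le]
    by (intro add_nonneg_nonneg sum_nonneg mult_nonneg_nonneg) auto
  define Yr where "Yr = (\<lambda>u \<omega>. r + lam * RV (u+1) \<omega> + sqrt (RV (u+1) \<omega>) * eps (u+1) \<omega>)"
  have lnS: "ln (S T \<omega> / S (T - int k) \<omega>) = (\<Sum>u\<in>{T - int k..<T}. Yr u \<omega>)" if \<omega>: "\<omega> \<in> space M" for k \<omega>
  proof (induction k)
    case 0
    then show ?case using S_pos[OF \<omega>, of T] by simp
  next
    case (Suc k)
    have e1: "T - int (Suc k) + 1 = T - int k" by simp
    have "S T \<omega> / S (T - int (Suc k)) \<omega> = (S (T - int (Suc k) + 1) \<omega> / S (T - int (Suc k)) \<omega>) * (S T \<omega> / S (T - int k) \<omega>)"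
      using S_pos[OF \<omega>, of "T - int k"] unfolding e1 by simp
    then have "ln (S T \<omega> / S (T - int (Suc k)) \<omega>) = ln (S (T - int (Suc k) + 1) \<omega> / S (T - int (Suc k)) \<omega>) + ln (S T \<omega> / S (T - int k) \<omega>)"
      using S_pos[OF \<omega>] by (simp only:) (rule ln_mult_pos; simp)
    also have "ln (S (T - int (Suc k) + 1) \<omega> / S (T - int (Suc k)) \<omega>) = Yr (T - int (Suc k)) \<omega>"
      unfolding S_ret[OF \<omega>] Yr_def ..
    finally have "ln (S T \<omega> / S (T - int (Suc k)) \<omega>) = Yr (T - int (Suc k)) \<omega> + ln (S T \<omega> / S (T - int k) \<omega>)" .
    moreover have "{T - int (Suc k)..<T} = insert (T - int (Suc k)) {T - int k..<T}" by auto
    ultimately show ?case using Suc by simp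
  qed
  define cf where "cf = lharg_coef r lam \<delta> \<theta> d \<gamma> p q \<beta> \<alpha> z"
  define A where "A = (\<lambda>k. fst (cf k))"
  define B where "B = (\<lambda>k. fst (snd (cf k)))"
  define C where "C = (\<lambda>k. snd (snd (cf k)))"
  define Xk where "Xk = (\<lambda>k. lharg_X lam \<gamma> z (cf k))"
  have Xk_eq: "Xk k = z * lam + B k 1 + ((1/2) * z\<^sup>2 + \<gamma>\<^sup>2 * C k 1 - 2 * C k 1 * \<gamma> * z) / (1 - 2 * C k 1)" for k
    unfolding Xk_def lharg_X_def B_def C_def by (cases "cf k") simp
  have A_Suc: "A (Suc k) = A k + z * r - (1/2) * ln (1 - 2 * C k 1) - \<delta> * ncg_w (Xk k) \<theta> + d * ncg_v (Xk k) \<theta>" for k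
    unfolding A_def C_def Xk_def cf_def by (simp add: Let_def)
  have B_Suc: "B (Suc k) i = (if 1 \<le> i \<and> i < p then B k (i + 1) + ncg_v (Xk k) \<theta> * \<beta> i
               else if i = p then ncg_v (Xk k) \<theta> * \<beta> p else 0)" for k i
    unfolding B_def Xk_def cf_def by (simp add: Let_def)
  have C_Suc: "C (Suc k) j = (if 1 \<le> j \<and> j < q then C k (j + 1) + ncg_v (Xk k) \<theta> * \<alpha> j
               else if j = q then ncg_v (Xk k) \<theta> * \<alpha> q else 0)" for k j
    unfolding C_def Xk_def cf_def by (simp add: Let_def)
  define Aff where "Aff = (\<lambda>k \<omega>. A k + (\<Sum>i=1..p. B k i * RV (T - int k + 1 - int i) \<omega>)
              + (\<Sum>j=1..q. C k j * leverage \<gamma> eps RV (T - int k + 1 - int j) \<omega>))"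
  define n where "n = nat (T - t)"
  have claim: "AE \<omega> in M. nn_cond_exp M (F (T - int k)) (\<lambda>\<omega>. ennreal (exp (z * (\<Sum>u\<in>{T - int k..<T}. Yr u \<omega>)))) \<omega>
       = ennreal (exp (Aff k \<omega>))" if "k \<le> n" for k
    using that
  proof (induction k)
    case 0
    have e: "Aff 0 \<omega> = 0" for \<omega> by (simp add: Aff_def A_def B_def C_def cf_def)
    have "AE \<omega> in M. (\<lambda>\<omega>. 1::ennreal) \<omega> = nn_cond_exp M (F T) (\<lambda>\<omega>. 1) \<omega>"
      by (rule sigma_finite_subalgebra.nn_cond_exp_F_meas[OF sfF]) simp
    then show ?case by (simp add: e)
  next
    case (Suc k)
    have kn: "k < n" using Suc.prems by simp
    define s where "s = T - int (Suc k)"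
    define s1 where "s1 = T - int k"
    have s1s: "s + 1 = s1" unfolding s_def s1_def by simp
    have IH: "AE \<omega> in M. nn_cond_exp M (F s1) (\<lambda>\<omega>. ennreal (exp (z * (\<Sum>u\<in>{s1..<T}. Yr u \<omega>)))) \<omega> = ennreal (exp (Aff k \<omega>))"
      using Suc.IH kn unfolding s1_def by simp
    define E1 where "E1 = (\<lambda>\<omega>. ennreal (exp (z * Yr s \<omega>)))"
    define E2 where "E2 = (\<lambda>\<omega>. ennreal (exp (z * (\<Sum>u\<in>{s1..<T}. Yr u \<omega>))))"
    define b where "b = B k 1"
    define c where "c = C k 1"
    define Q where "Q = (\<lambda>\<omega>. ennreal (exp (z*r + (z*lam + b)*RV s1 \<omega> + z * sqrt (RV s1 \<omega>) * eps s1 \<omega> + c*(eps s1 \<omega> - \<gamma> * sqrt (RV s1 \<omega>))\<^sup>2)))"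
    define Rk where "Rk = (\<lambda>\<omega>. A k + (\<Sum>i\<in>{2..p}. B k i * RV (s1 + 1 - int i) \<omega>) + (\<Sum>j\<in>{2..q}. C k j * leverage \<gamma> eps RV (s1 + 1 - int j) \<omega>))"
    have Yr_meas[measurable]: "(\<lambda>\<omega>. Yr u \<omega>) \<in> borel_measurable M" for u unfolding Yr_def by measurable
    have E1m[measurable]: "E1 \<in> borel_measurable (F s1)"
    proof -
      have [measurable]: "RV s1 \<in> borel_measurable (F s1)" "eps s1 \<in> borel_measurable (F s1)"
        by (auto intro: RVF epsF)
      show ?thesis unfolding E1_def Yr_def s1s by measurable
    qed
    have E2m[measurable]: "E2 \<in> borel_measurable M" unfolding E2_def by measurable
    have E1M[measurable]: "E1 \<in> borel_measurable M" by (rule measurable_from_subalg[OF subF E1m])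
    have fsplit: "(\<lambda>\<omega>. ennreal (exp (z * (\<Sum>u\<in>{s..<T}. Yr u \<omega>)))) = (\<lambda>\<omega>. E1 \<omega> * E2 \<omega>)"
    proof
      fix \<omega>
      have "{s..<T} = insert s {s1..<T}" using kn unfolding s_def s1_def n_def by auto
      moreover have "s \<notin> {s1..<T}" using s1s by auto
      ultimately have "(\<Sum>u\<in>{s..<T}. Yr u \<omega>) = Yr s \<omega> + (\<Sum>u\<in>{s1..<T}. Yr u \<omega>)" by simp
      then show "ennreal (exp (z * (\<Sum>u\<in>{s..<T}. Yr u \<omega>))) = E1 \<omega> * E2 \<omega>"
        unfolding E1_def E2_def by (simp add: distrib_left exp_add ennreal_mult)
    qed
    have subFF': "subalgebra (F s1) (F s)" using subFF[of s] unfolding s1s .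
    have H: "AE \<omega> in M. nn_cond_exp M (F s1) (\<lambda>\<omega>. E1 \<omega> * E2 \<omega>) \<omega> = E1 \<omega> * ennreal (exp (Aff k \<omega>))"
      using sigma_finite_subalgebra.nn_cond_exp_prod[OF sfF E1m E2m] IH unfolding E2_def[symmetric]
      by (auto elim: AE_mp)
    have Hsplit: "E1 \<omega> * ennreal (exp (Aff k \<omega>)) = ennreal (exp (Rk \<omega>)) * Q \<omega>" for \<omega>
    proof -
      have sp: "(\<Sum>i=1..p. B k i * RV (s1 + 1 - int i) \<omega>) = B k 1 * RV (s1 + 1 - int 1) \<omega> + (\<Sum>i\<in>{2..p}. B k i * RV (s1 + 1 - int i) \<omega>)"
        by (rule sum_split1[OF par(4)])
      have sq: "(\<Sum>j=1..q. C k j * leverage \<gamma> eps RV (s1 + 1 - int j) \<omega>) = C k 1 * leverage \<gamma> eps RV (s1 + 1 - int 1) \<omega> + (\<Sum>j\<in>{2..q}. C k j * leverage \<gamma> eps RV (s1 + 1 - int j) \<omega>)"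
        by (rule sum_split1[OF par(5)])
      have "z * Yr s \<omega> + Aff k \<omega> = Rk \<omega> + (z*r + (z*lam + b)*RV s1 \<omega> + z * sqrt (RV s1 \<omega>) * eps s1 \<omega> + c*(eps s1 \<omega> - \<gamma> * sqrt (RV s1 \<omega>))\<^sup>2)"
        unfolding Aff_def s1_def[symmetric] sp sq unfolding Rk_def Yr_def s1s b_def c_def leverage_def
        by (simp add: algebra_simps)
      then show ?thesis unfolding E1_def Q_def
        by (simp add: ennreal_mult[symmetric] exp_add[symmetric])
    qed
    have step1: "AE \<omega> in M. nn_cond_exp M (F s) (\<lambda>\<omega>. E1 \<omega> * E2 \<omega>) \<omega> = nn_cond_exp M (F s) (nn_cond_exp M (F s1) (\<lambda>\<omega>. E1 \<omega> * E2 \<omega>)) \<omega>"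
      by (rule sigma_finite_subalgebra.nn_cond_exp_nested_subalg[OF sfF subF subFF']) simp
    have Rkm[measurable]: "(\<lambda>\<omega>. ennreal (exp (Rk \<omega>))) \<in> borel_measurable (F s)"
    proof -
      have [measurable]: "(\<lambda>\<omega>. \<Sum>i\<in>{2..p}. B k i * RV (s1 + 1 - int i) \<omega>) \<in> borel_measurable (F s)"
      proof (rule borel_measurable_sum)
        fix i assume "i \<in> {2..p}"
        then have "s1 + 1 - int i \<le> s" using s1s by auto
        then have [measurable]: "RV (s1 + 1 - int i) \<in> borel_measurable (F s)" by (rule RVF)
        show "(\<lambda>\<omega>. B k i * RV (s1 + 1 - int i) \<omega>) \<in> borel_measurable (F s)" by measurable
      qed
      have [measurable]: "(\<lambda>\<omega>. \<Sum>j\<in>{2..q}. C k j * leverage \<gamma> eps RV (s1 + 1 - int j) \<omega>) \<in> borel_measurable (F s)"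
      proof (rule borel_measurable_sum)
        fix j assume "j \<in> {2..q}"
        then have "s1 + 1 - int j \<le> s" using s1s by auto
        then have [measurable]: "(\<lambda>\<omega>. leverage \<gamma> eps RV (s1 + 1 - int j) \<omega>) \<in> borel_measurable (F s)" by (rule levF)
        show "(\<lambda>\<omega>. C k j * leverage \<gamma> eps RV (s1 + 1 - int j) \<omega>) \<in> borel_measurable (F s)" by measurable
      qed
      show ?thesis unfolding Rk_def by measurable
    qed
    have Qm[measurable]: "Q \<in> borel_measurable M" unfolding Q_def by measurable
    have RkM[measurable]: "(\<lambda>\<omega>. ennreal (exp (Rk \<omega>))) \<in> borel_measurable M" by (rule measurable_from_subalg[OF subF Rkm])
    have step2: "AE \<omega> in M. nn_cond_exp M (F s) (nn_cond_exp M (F s1) (\<lambda>\<omega>. E1 \<omega> * E2 \<omega>)) \<omega> = nn_cond_exp M (F s) (\<lambda>\<omega>. ennreal (exp (Rk \<omega>)) * Q \<omega>) \<omega>"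
      by (rule sigma_finite_subalgebra.nn_cond_exp_cong[OF sfF]) (use H Hsplit in auto)
    have step3: "AE \<omega> in M. ennreal (exp (Rk \<omega>)) * nn_cond_exp M (F s) Q \<omega> = nn_cond_exp M (F s) (\<lambda>\<omega>. ennreal (exp (Rk \<omega>)) * Q \<omega>) \<omega>"
      by (rule sigma_finite_subalgebra.nn_cond_exp_prod[OF sfF Rkm Qm])
    have step4: "AE \<omega> in M. nn_cond_exp M (F s) Q \<omega> = ennreal (exp (z*r - 1/2 * ln (1 - 2*c) - \<delta> * ncg_w (Xk k) \<theta> + Th s \<omega> * ncg_v (Xk k) \<theta>))"
    proof -
      have ind: "prob_space.indep_set M (sets (Gs s)) {eps s1 -` B \<inter> space M | B. B \<in> sets borel}"
        using eps_indep_past[of s] unfolding Gs_def F_def rv_events_def s1s .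
      have law: "AE \<omega> in M. nn_cond_exp M (F s) (indicator (RV s1 -` B \<inter> space M)) \<omega> = emeasure (ncgamma \<delta> (Th s \<omega>) \<theta>) B"
        if "B \<in> sets borel" for B
        using RV_cond_law[OF that, of s] unfolding F_def Th_def s1s .
      have RVG': "RV s1 \<in> borel_measurable (Gs s)" using RVG[of s] unfolding s1s .
      have cpos: "1 - 2*c > 0" using cond1[of k] kn unfolding n_def c_def C_def cf_def by simp
      have X: "\<theta> * (z * lam + b + ((1/2) * z\<^sup>2 + \<gamma>\<^sup>2 * c - 2 * c * \<gamma> * z) / (1 - 2 * c)) < 1"
        using cond2[of k] kn Xk_eq[of k] unfolding n_def b_def c_def Xk_def cf_def by simp
      have "AE \<omega> in M. nn_cond_exp M (F s) (\<lambda>\<omega>. ennreal (exp (z*r + (z*lam + b)*RV s1 \<omega> + z * sqrt (RV s1 \<omega>) * eps s1 \<omega> + c*(eps s1 \<omega> - \<gamma> * sqrt (RV s1 \<omega>))\<^sup>2))) \<omega>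
         = ennreal (exp (z*r - 1/2 * ln (1 - 2*c) - \<delta> * ncg_w (z * lam + b + ((1/2) * z\<^sup>2 + \<gamma>\<^sup>2 * c - 2 * c * \<gamma> * z) / (1 - 2 * c)) \<theta> 
              + Th s \<omega> * ncg_v (z * lam + b + ((1/2) * z\<^sup>2 + \<gamma>\<^sup>2 * c - 2 * c * \<gamma> * z) / (1 - 2 * c)) \<theta>))"
        by (rule step_star[OF prob subG subGF RVG' RV_pos eps_meas ind eps_normal law Th0 par(1) par(2) cpos X])
      moreover have "Xk k = z * lam + b + ((1/2) * z\<^sup>2 + \<gamma>\<^sup>2 * c - 2 * c * \<gamma> * z) / (1 - 2 * c)"
        unfolding Xk_eq b_def c_def ..
      ultimately show ?thesis unfolding Q_def by simp
    qed
    have final: "ennreal (exp (Rk \<omega>)) * ennreal (exp (z*r - 1/2 * ln (1 - 2*c) - \<delta> * ncg_w (Xk k) \<theta> + Th s \<omega> * ncg_v (Xk k) \<theta>))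
        = ennreal (exp (Aff (Suc k) \<omega>))" for \<omega>
    proof -
      define v where "v = ncg_v (Xk k) \<theta>"
      have SB: "(\<Sum>i\<in>{2..p}. B k i * RV (s1 + 1 - int i) \<omega>) + v * (\<Sum>i=1..p. \<beta> i * RV (s1 - int i) \<omega>)
          = (\<Sum>i=1..p. B (Suc k) i * RV (s1 - int i) \<omega>)"
        using shift_sum[of p "B (Suc k)" "B k" v \<beta> "\<lambda>m. RV m \<omega>" s1] par(4) B_Suc unfolding v_def by simp
      have SC: "(\<Sum>j\<in>{2..q}. C k j * leverage \<gamma> eps RV (s1 + 1 - int j) \<omega>) + v * (\<Sum>j=1..q. \<alpha> j * leverage \<gamma> eps RV (s1 - int j) \<omega>)
          = (\<Sum>j=1..q. C (Suc k) j * leverage \<gamma> eps RV (s1 - int j) \<omega>)"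
        using shift_sum[of q "C (Suc k)" "C k" v \<alpha> "\<lambda>m. leverage \<gamma> eps RV m \<omega>" s1] par(5) C_Suc unfolding v_def by simp
      have "Rk \<omega> + (z*r - 1/2 * ln (1 - 2*c) - \<delta> * ncg_w (Xk k) \<theta> + Th s \<omega> * v) = Aff (Suc k) \<omega>"
        unfolding Rk_def Aff_def Th_def lharg_Theta_def A_Suc s_def[symmetric] s1s c_def SB[symmetric] SC[symmetric]
        by (simp add: algebra_simps v_def)
      then show ?thesis unfolding v_def
        by (simp add: ennreal_mult[symmetric] exp_add[symmetric])
    qed
    show ?case unfolding s_def[symmetric] fsplit
      using step1 step2 step3 step4 final by (auto elim!: AE_mp)
  qed
  have Tn: "T - int n = t" unfolding n_def using tT by simp
  have "AE \<omega> in M. nn_cond_exp M (F t) (\<lambda>\<omega>. ennreal (exp (z * ln (S T \<omega> / S t \<omega>)))) \<omega>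
      = nn_cond_exp M (F t) (\<lambda>\<omega>. ennreal (exp (z * (\<Sum>u\<in>{t..<T}. Yr u \<omega>)))) \<omega>"
  proof (rule sigma_finite_subalgebra.nn_cond_exp_cong[OF sfF])
    show "AE \<omega> in M. ennreal (exp (z * ln (S T \<omega> / S t \<omega>))) = ennreal (exp (z * (\<Sum>u\<in>{t..<T}. Yr u \<omega>)))"
      using lnS[of _ n] unfolding Tn by auto
    show "(\<lambda>\<omega>. ennreal (exp (z * (\<Sum>u\<in>{t..<T}. Yr u \<omega>)))) \<in> borel_measurable M"
      unfolding Yr_def by measurable
    then show "(\<lambda>\<omega>. ennreal (exp (z * ln (S T \<omega> / S t \<omega>)))) \<in> borel_measurable M"
      by (rule measurable_cong[THEN iffD2, rotated]) (use lnS[of _ n] Tn in auto)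
  qed
  then show ?thesis using claim[of n] unfolding Tn F_def[symmetric] Aff_def A_def B_def C_def cf_def n_def[symmetric]
    by (auto elim: AE_mp)
qed

end
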